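(* Consider the algorithm AOD described in the context, with known horizon $T$, under assumption (A3). For any interval $J=[i,j]\in\mathcal{D}$ and every $t\in J$ with $t\le T$, \[ \sum_{u=i}^t f_u(\mathbf{w}_u)-\sum_{u=i}^t f_u(\mathbf{w}_{u,J})\le\sqrt{3(t-i+1)c(t)}, \] where $c(t)=1+\ln t+\ln(1+\log_2 T)+\ln\frac{5+3\ln(1+t)}{2}$.
   Context: Online convex optimization: $\Omega\subseteq\mathbb{R}^d$ convex; in round $t=1,\ldots,T$ the learner plays $\mathbf{w}_t\in\Omega$ and then a convex $f_t:\Omega\to\mathbb{R}$ is revealed. Assumption (A3): $0\le f_t(\mathbf{w})\le1$ for all $\mathbf{w}\in\Omega$, $t\in[T]$. (Gradients $\nabla f_t$ are assumed to exist; $D,G>0$ are constants; $\Pi_\Omega$ is Euclidean projection.) Dense geometric covering intervals: $\mathcal{D}=\bigcup_{k\ge0,\,2^k\le T}\mathcal{D}_k$, $\mathcal{D}_k=\{[(i-1)2^k+1,\,i2^k]: i=1,2,\ldots\}$. Algorithm AOD: for each $I\in\mathcal{D}$ an expert $E_I$ runs online gradient descent $\mathbf{w}_{t+1,I}=\Pi_\Omega[\mathbf{w}_{t,I}-\eta_I\nabla f_t(\mathbf{w}_{t,I})]$, $\eta_I=D/(G\sqrt{|I|})$, over rounds $t\in I$; its initial point is arbitrary if $\min I=1$, and otherwise is the next iterate of the expert of the preceding same-length interval $[\min I-|I|,\min I-1]$ after processing $f_{\min I-1}$. Active experts at round $t$: $\mathcal{A}_t=\{E_I:I\in\mathcal{D},t\in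 I\}$. Meta-algorithm (AdaNormalHedge): $\Phi(R,C)=\exp([R]_+^2/(3C))$, $[x]_+=\max(0,x)$, $\Phi(0,0)=1$, $w(R,C)=\tfrac12(\Phi(R+1,C+1)-\Phi(R-1,C+1))$, $R_{t-1,I}=\sum_{u=\min I}^{t-1}(f_u(\mathbf{w}_u)-f_u(\mathbf{w}_{u,I}))$, $C_{t-1,I}=\sum_{u=\min I}^{t-1}|f_u(\mathbf{w}_u)-f_u(\mathbf{w}_{u,I})|$, $p_{t,I}=w(R_{t-1,I},C_{t-1,I})/\sum_{E_{I'}\in\mathcal{A}_t}w(R_{t-1,I'},C_{t-1,I'})$, played point $\mathbf{w}_t=\sum_{E_I\in\mathcal{A}_t}p_{t,I}\mathbf{w}_{t,I}$. *)

theory Defs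
  imports "HOL-Analysis.Analysis"
begin

text \<open>Dense geometric covering intervals D restricted to lengths 2^k <= T.
  Intervals are represented literally as sets of rounds.\<close>
definition dense_intervals :: "nat \<Rightarrow> nat set set" where
  "dense_intervals T = {{(i - 1) * 2 ^ k + 1 .. i * 2 ^ k} | k i. 2 ^ k \<le> T \<and> 1 \<le> i}"

definition active :: "nat \<Rightarrow> nat \<Rightarrow> nat set set" where
  "active T t = {I \<in> dense_intervals T. t \<in> I}"

definition proj :: "'a::euclidean_space set \<Rightarrow> 'a \<Rightarrow> 'a" where
  "proj \<Omega> x = (SOME y. y \<in> \<Omega> \<and> (\<forall>z\<in>\<Omega>. dist x y \<le> dist x z))"

text \<open>AdaNormalHedge potential; with Isabelle's x/0 = 0 we get Phi 0 0 = 1.\<close>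
definition Phi :: "real \<Rightarrow> real \<Rightarrow> real" where
  "Phi R C = exp ((max 0 R)\<^sup>2 / (3 * C))"

definition anh_w :: "real \<Rightarrow> real \<Rightarrow> real" where
  "anh_w R C = (Phi (R + 1) (C + 1) - Phi (R - 1) (C + 1)) / 2"

text \<open>R_{t-1,I} and C_{t-1,I}: sums over u from min I to t-1.\<close>
definition regR :: "(nat \<Rightarrow> 'a \<Rightarrow> real) \<Rightarrow> (nat \<Rightarrow> 'a) \<Rightarrow> (nat set \<Rightarrow> nat \<Rightarrow> 'a) \<Rightarrow> nat set \<Rightarrow> nat \<Rightarrow> real" where
  "regR f w wexp I t = (\<Sum>u\<in>{Min I..<t}. f u (w u) - f u (wexp I u))"

definition regC :: "(nat \<Rightarrow> 'a \<Rightarrow> real) \<Rightarrow> (nat \<Rightarrow> 'a) \<Rightarrow> (nat set \<Rightarrow> nat \<Rightarrow> 'a) \<Rightarrow> nat set \<Rightarrow> nat \<Rightarrow> real" where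
  "regC f w wexp I t = (\<Sum>u\<in>{Min I..<t}. \<bar>f u (w u) - f u (wexp I u)\<bar>)"

definition meta_p :: "nat \<Rightarrow> (nat \<Rightarrow> 'a \<Rightarrow> real) \<Rightarrow> (nat \<Rightarrow> 'a) \<Rightarrow> (nat set \<Rightarrow> nat \<Rightarrow> 'a) \<Rightarrow> nat \<Rightarrow> nat set \<Rightarrow> real" where
  "meta_p T f w wexp t I =
     anh_w (regR f w wexp I t) (regC f w wexp I t) /
     (\<Sum>I'\<in>active T t. anh_w (regR f w wexp I' t) (regC f w wexp I' t))"

definition eta :: "real \<Rightarrow> real \<Rightarrow> nat set \<Rightarrow> real" where
  "eta D G I = D / (G * sqrt (real (card I)))"

end

theory Submission imports Defs "HOL-Probability.Hoeffding" begin

lemma ln_lower: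
  fixes y :: real assumes "0 \<le> y" shows "y - y^2/2 \<le> ln (1+y)"
proof -
  let ?g = "\<lambda>x::real. ln (1+x) - x + x^2/2"
  have "?g 0 \<le> ?g y"
  proof (rule DERIV_nonneg_imp_nondecreasing[OF assms])
    fix x :: real assume x: "0 \<le> x" "x \<le> y"
    show "\<exists>d. DERIV ?g x :> d \<and> d \<ge> 0"
    proof (intro exI conjI)
      show "DERIV ?g x :> 1/(1+x) - 1 + x"
        using x by (auto intro!: derivative_eq_intros)
      have "1/(1+x) - 1 + x = x^2/(1+x)" using x by (simp add: field_simps power2_eq_square)
      then show "1/(1+x) - 1 + x \<ge> 0" using x by simp
    qed
  qed
  then show ?thesis by simp
qed

lemma harm_step:
  fixes x C :: real assumes x: "0 \<le> x" "x \<le> 1" and C: "0 \<le> C"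
  shows "x/(C+1) \<le> (ln (1+(C+x)) - 1/(1+(C+x))) - (ln (1+C) - 1/(1+C))"
proof -
  define y where "y = x/(1+C)"
  have y0: "0 \<le> y" using x C by (simp add: y_def)
  have "1 + y = (1+(C+x))/(1+C)" using C by (simp add: y_def field_simps)
  hence ly: "ln (1+y) = ln (1+(C+x)) - ln (1+C)" using C x by (simp add: ln_div)
  have "y^2/2 = x^2/(2*(1+C)^2)" by (simp add: y_def power_divide)
  also have "\<dots> \<le> 1/(1+C) - 1/(1+(C+x))"
  proof -
    have "x*(1+C) \<le> 1+C" using x C by (simp add: mult_left_le_one_le)
    moreover have "x*x \<le> 1" using x by (simp add: mult_le_one)
    ultimately have "x*(1+C+x) \<le> 2*(1+C)" using C by (simp add: algebra_simps)
    hence "(x*(1+C))*(x*(1+C+x)) \<le> (x*(1+C))*(2*(1+C))" using x C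
      by (intro mult_left_mono) auto
    hence "x^2*((1+C)*(1+(C+x))) \<le> x*(2*(1+C)^2)"
      by (simp add: power2_eq_square algebra_simps)
    hence H: "x^2*((1+C)*(1+(C+x))) / (2*(1+C)^2*((1+C)*(1+(C+x)))) \<le> x*(2*(1+C)^2) / (2*(1+C)^2*((1+C)*(1+(C+x))))"
      using x C by (intro divide_right_mono) auto
    have E1: "x^2*((1+C)*(1+(C+x))) / (2*(1+C)^2*((1+C)*(1+(C+x)))) = x^2/(2*(1+C)^2)"
      using x C by (intro nonzero_mult_divide_mult_cancel_right) auto
    have E2: "x*(2*(1+C)^2) / (2*(1+C)^2*((1+C)*(1+(C+x)))) = x/((1+C)*(1+(C+x)))"
      using x C by (intro nonzero_mult_divide_mult_cancel_right2) auto
    have E3: "x/((1+C)*(1+(C+x))) = 1/(1+C) - 1/(1+(C+x))"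
      using x C by (simp add: field_simps)
    show ?thesis using H E1 E2 E3 by simp
  qed
  finally have "y^2/2 \<le> 1/(1+C) - 1/(1+(C+x))" .
  with ln_lower[OF y0] ly show ?thesis by (simp add: y_def add.commute)
qed

lemma cosh_bound:
  fixes y :: real shows "(exp y + exp (-y))/2 \<le> exp (y^2/2)"
proof -
  define h where "h = 2*\<bar>y\<bar>"
  have "- h * (1/2) + ln (1 + (1/2) * (exp h - 1)) \<le> h^2/8"
    using Hoeffdings_lemma_aux[of h "1/2"] by (simp add: h_def)
  hence L: "ln ((1 + exp h)/2) \<le> \<bar>y\<bar> + y^2/2"
    by (simp add: h_def power2_eq_square field_simps)
  have "(1 + exp h)/2 \<le> exp (\<bar>y\<bar> + y^2/2)"
  proof -
    have "(1 + exp h)/2 = exp (ln ((1 + exp h)/2))"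
      by (intro exp_ln[symmetric]) (simp add: add_pos_pos)
    also have "\<dots> \<le> exp (\<bar>y\<bar> + y^2/2)" using L by simp
    finally show ?thesis .
  qed
  hence "exp (-\<bar>y\<bar>) * ((1 + exp h)/2) \<le> exp (-\<bar>y\<bar>) * exp (\<bar>y\<bar> + y^2/2)"
    by simp
  hence "(exp (-\<bar>y\<bar>) + exp \<bar>y\<bar>)/2 \<le> exp (y^2/2)"
    by (simp add: h_def field_simps flip: exp_add)
  thus ?thesis by (cases "y \<ge> 0") (auto simp: add.commute)
qed

lemma frac_le_cross:
  fixes a b c d :: real
  assumes "0 < b" "0 < d" "a*d \<le> c*b" shows "a/b \<le> c/d"
  using assms by (simp add: divide_simps)

lemma Phi_D: "Phi X (C+1) = exp ((max 0 X)^2 * (1/(3*(C+1))))"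
  by (simp add: Phi_def)

lemma core:
  fixes R C :: real assumes C: "0 \<le> C" and RC: "\<bar>R\<bar> \<le> C"
  shows "(Phi (R+1) (C+1) + Phi (R-1) (C+1))/2 \<le> Phi R C + 4/(C+1)"
proof -
  define a where "a = 1/(3*(C+1))"
  have a0: "0 < a" and a1: "a \<le> 1/3" using C by (auto simp: a_def field_simps)
  have a4: "4/(C+1) = 12*a" using C by (simp add: a_def field_simps)
  show ?thesis
  proof (cases "R < 0")
    case True
    have p1: "Phi (R-1) (C+1) = 1" "Phi R C = 1" using True by (simp_all add: Phi_def)
    have "0 \<le> max 0 (R+1)" "max 0 (R+1) \<le> 1" using True by auto
    hence "(max 0 (R+1))^2 \<le> 1" by (rule power_le_one)
    hence "(max 0 (R+1))^2 * a \<le> a" using a0 by (simp add: mult_left_le_one_le)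
    hence "Phi (R+1) (C+1) \<le> exp a" unfolding Phi_D a_def[symmetric] by simp
    also have "\<dots> \<le> 1 + a + a^2" using exp_bound[of a] a0 a1 by simp
    finally have "Phi (R+1) (C+1) \<le> 1 + a + a^2" .
    moreover have "a^2 \<le> a" using a0 a1 by (simp add: power2_eq_square mult_left_le_one_le)
    ultimately show ?thesis using p1 a4 a0 by simp
  next
    case False
    hence R0: "0 \<le> R" by simp
    define v where "v = a*R^2"
    have v0: "0 \<le> v" using a0 by (simp add: v_def)
    have P1: "Phi (R+1) (C+1) = exp ((R+1)^2*a)" using R0 unfolding Phi_D a_def[symmetric] by simp
    have "(max 0 (R-1))^2 \<le> (R-1)^2" by (cases "R-1 \<le> 0") (auto simp: max_def)
    hence P2: "Phi (R-1) (C+1) \<le> exp ((R-1)^2*a)" using a0 unfolding Phi_D a_def[symmetric]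
      by (simp add: mult_right_mono)
    have "exp ((R+1)^2*a) + exp ((R-1)^2*a) = exp (v + a) * (exp (2*a*R) + exp (-(2*a*R)))"
      by (simp add: v_def power2_eq_square algebra_simps flip: exp_add)
    also have "\<dots> \<le> exp (v + a) * (2 * exp ((2*a*R)^2/2))"
      using cosh_bound[of "2*a*R"] by (intro mult_left_mono) auto
    also have "\<dots> = exp (v + a) * (2 * exp (2*a * v))" by (simp add: v_def power2_eq_square)
    finally have L: "(Phi (R+1) (C+1) + Phi (R-1) (C+1))/2 \<le> exp (v + a + 2*a * v)"
      using P1 P2 by (simp add: exp_add)
    have PR: "exp (v + 3*a * v) \<le> Phi R C"
    proof (cases "R = 0")
      case True thus ?thesis by (simp add: v_def Phi_def)
    next
      case False
      hence Cp: "0 < C" using RC R0 by simp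
      have "a + 3*a^2 \<le> 1/(3*C)"
      proof -
        have D: "C+1 > 0" using C by simp
        have aux: "1/(3*E) + 3*(1/(3*E))^2 = (3*E + 3)/(9*E^2)" if "E > 0" for E :: real
          using that by (simp add: field_simps power2_eq_square)
        have "a + 3*a^2 = (3*(C+1) + 3)/(9*(C+1)^2)" unfolding a_def by (rule aux[OF D])
        also have "\<dots> \<le> 1/(3*C)"
        proof (rule frac_le_cross)
          show "0 < 9*(C+1)^2" using Cp by simp
          show "0 < 3*C" using Cp by simp
          show "(3*(C+1) + 3) * (3*C) \<le> 1 * (9*(C+1)^2)" by (simp add: algebra_simps power2_eq_square)
        qed
        finally show ?thesis .
      qed
      hence "(a + 3*a^2) * R^2 \<le> (1/(3*C)) * R^2" by (intro mult_right_mono) auto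
      hence "v + 3*a * v \<le> (max 0 R)^2/(3*C)" using R0 by (simp add: v_def power2_eq_square algebra_simps)
      thus ?thesis by (simp add: Phi_def)
    qed
    show ?thesis
    proof (cases "1 \<le> v")
      case True
      hence "a \<le> a * v" using a0 by simp
      hence "exp (v + a + 2*a * v) \<le> exp (v + 3*a * v)" by simp
      thus ?thesis using L PR a4 a0 by linarith
    next
      case False
      have e1: "exp (v + a + 2*a * v) = exp (v + 2*a * v) * exp a" by (simp flip: exp_add add: algebra_simps)
      have "exp a \<le> 1 + a + a^2" using exp_bound[of a] a0 a1 by simp
      moreover have "a^2 \<le> a/3" using a0 a1 by (simp add: power2_eq_square)
      ultimately have ea: "exp a \<le> 1 + 4/3*a" by simp
      have "a * v \<le> (1/3) * 1" using False a1 v0 a0 by (intro mult_mono) auto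
      hence "v + 2*a * v \<le> 2" using False by linarith
      hence "exp (v + 2*a * v) \<le> exp 1 * exp 1" by (simp flip: exp_add)
      also have "\<dots> \<le> 3 * 3" using exp_le by (intro mult_mono) auto
      finally have b9: "exp (v + 2*a * v) \<le> 9" by simp
      have "exp (v + a + 2*a * v) \<le> exp (v + 2*a * v) * (1 + 4/3*a)"
        unfolding e1 using ea by (intro mult_left_mono) auto
      also have "\<dots> = exp (v + 2*a * v) + exp (v + 2*a * v) * (4/3*a)" by (simp add: algebra_simps)
      also have "\<dots> \<le> exp (v + 3*a * v) + 9 * (4/3*a)"
        using b9 a0 v0 by (intro add_mono mult_right_mono) (auto intro: mult_nonneg_nonneg)
      finally show ?thesis using L PR a4 by linarith
    qed
  qed
qed

lemma cs_ineq:
  fixes s x0 x1 y0 y1 :: real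
  assumes s: "0 \<le> s" "s \<le> 1" and y: "0 < y0" "0 < y1"
  shows "((1-s)*x0 + s*x1)^2 / ((1-s)*y0 + s*y1) \<le> (1-s)*x0^2/y0 + s*x1^2/y1"
proof -
  have Y: "0 < (1-s)*y0 + s*y1"
  proof (cases "s = 0")
    case False
    hence "0 < s*y1" using s y by simp
    moreover have "0 \<le> (1-s)*y0" using s y by simp
    ultimately show ?thesis by linarith
  qed (use y in simp)
  have R: "(1-s)*x0^2/y0 + s*x1^2/y1 = ((1-s)*x0^2*y1 + s*x1^2*y0)/(y0*y1)"
    using y by (simp add: field_simps)
  have id: "((1-s)*x0^2*y1 + s*x1^2*y0) * ((1-s)*y0 + s*y1) - ((1-s)*x0 + s*x1)^2 * (y0*y1)
      = s*(1-s)*(x0*y1 - x1*y0)^2"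
    by (simp add: power2_eq_square algebra_simps)
  have "0 \<le> s*(1-s)*(x0*y1 - x1*y0)^2" using s by simp
  hence "((1-s)*x0 + s*x1)^2 * (y0*y1) \<le> ((1-s)*x0^2*y1 + s*x1^2*y0) * ((1-s)*y0 + s*y1)"
    using id by linarith
  hence "((1-s)*x0 + s*x1)^2 / ((1-s)*y0 + s*y1) \<le> ((1-s)*x0^2*y1 + s*x1^2*y0)/(y0*y1)"
    using Y y by (intro frac_le_cross) auto
  thus ?thesis using R by simp
qed

lemma interp:
  fixes R C s \<sigma> :: real
  assumes C: "0 \<le> C" and RC: "\<bar>R\<bar> \<le> C" and s: "0 \<le> s" "s \<le> 1"
  shows "Phi (R + \<sigma> * s) (C+s) \<le> (1-s)*Phi R C + s*Phi (R+\<sigma>) (C+1)"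
proof -
  define h where "h = (\<lambda>s. (max 0 (R+\<sigma> * s))^2/(3*(C+s)))"
  have Ph: "Phi (R + \<sigma> * s) (C+s) = exp (h s)" "Phi R C = exp (h 0)" "Phi (R+\<sigma>) (C+1) = exp (h 1)"
    by (simp_all add: Phi_def h_def)
  have hs: "h s \<le> (1-s) * h 0 + s * h 1"
  proof (cases "C = 0")
    case True
    hence R0: "R = 0" using RC by simp
    have m: "max 0 (\<sigma> * s) = s * max 0 \<sigma>" using s by (cases "0 \<le> \<sigma>") (auto simp: max_def mult_le_0_iff zero_le_mult_iff)
    show ?thesis
    proof (cases "s = 0")
      case True thus ?thesis by (simp add: h_def)
    next
      case False
      hence "h s = s * h 1" using True R0 m s
        by (simp add: h_def power2_eq_square field_simps)
      thus ?thesis using True R0 by (simp add: h_def)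
    qed
  next
    case False
    hence Cp: "0 < C" using C by simp
    define x0 where "x0 = max 0 R"
    define x1 where "x1 = max 0 (R+\<sigma>)"
    have eq: "R+\<sigma> * s = (1-s)*R + s*(R+\<sigma>)" by (simp add: algebra_simps)
    have "(1-s)*R \<le> (1-s)*x0" using s unfolding x0_def by (intro mult_left_mono) auto
    moreover have "s*(R+\<sigma>) \<le> s*x1" using s unfolding x1_def by (intro mult_left_mono) auto
    moreover have "0 \<le> (1-s)*x0" "0 \<le> s*x1" using s unfolding x0_def x1_def by auto
    ultimately have xs: "max 0 (R+\<sigma> * s) \<le> (1-s)*x0 + s*x1" unfolding eq by simp
    have den: "3*(C+s) = (1-s)*(3*C) + s*(3*(C+1))" by (simp add: algebra_simps)
    have "(max 0 (R+\<sigma> * s))^2 \<le> ((1-s)*x0 + s*x1)^2"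
      using xs by (intro power_mono) auto
    hence "h s \<le> ((1-s)*x0 + s*x1)^2 / (3*(C+s))"
      unfolding h_def using Cp s by (intro divide_right_mono) auto
    also have "\<dots> = ((1-s)*x0 + s*x1)^2 / ((1-s)*(3*C) + s*(3*(C+1)))" using den by simp
    also have "\<dots> \<le> (1-s)*x0^2/(3*C) + s*x1^2/(3*(C+1))"
      using Cp s by (intro cs_ineq) auto
    also have "\<dots> = (1-s) * h 0 + s * h 1" by (simp add: h_def x0_def x1_def)
    finally show ?thesis .
  qed
  have "exp (h s) \<le> exp ((1-s) * h 0 + s * h 1)" using hs by simp
  also have "\<dots> \<le> (1-s) * exp (h 0) + s * exp (h 1)"
    using convex_onD[OF exp_convex, of s "h 0" "h 1"] s by simp
  finally show ?thesis using Ph by simp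
qed

lemma lin_aux: fixes a b p f :: real assumes "(a+b)/2 \<le> p + f" shows "a - p \<le> (a-b)/2 + f"
  using assms by (simp add: add_divide_distrib diff_divide_distrib)
lemma lin_aux2: fixes a b p f :: real assumes "(a+b)/2 \<le> p + f" shows "b - p \<le> - ((a-b)/2) + f"
  using assms by (simp add: add_divide_distrib diff_divide_distrib)

lemma phi_step:
  fixes R C r :: real
  assumes C: "0 \<le> C" and RC: "\<bar>R\<bar> \<le> C" and r: "\<bar>r\<bar> \<le> 1"
  shows "Phi (R+r) (C+\<bar>r\<bar>) \<le> Phi R C + anh_w R C * r + 4*\<bar>r\<bar>/(C+1)"
proof -
  have co: "(Phi (R+1) (C+1) + Phi (R-1) (C+1))/2 \<le> Phi R C + 4/(C+1)" by (rule core[OF C RC])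
  have c1: "Phi (R+1) (C+1) - Phi R C \<le> anh_w R C + 4/(C+1)"
    using lin_aux[OF co] unfolding anh_w_def .
  have c2: "Phi (R-1) (C+1) - Phi R C \<le> - anh_w R C + 4/(C+1)"
    using lin_aux2[OF co] unfolding anh_w_def .
  show ?thesis
  proof (cases "0 \<le> r")
    case True
    have "Phi (R+r) (C+\<bar>r\<bar>) = Phi (R + 1*r) (C+r)" using True by simp
    also have "\<dots> \<le> (1-r)*Phi R C + r*Phi (R+1) (C+1)" using interp[OF C RC, of r 1] True r by simp
    also have "\<dots> = Phi R C + r*(Phi (R+1) (C+1) - Phi R C)" by (simp add: algebra_simps)
    also have "\<dots> \<le> Phi R C + r*(anh_w R C + 4/(C+1))"
      using c1 True by (intro add_left_mono mult_left_mono) auto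
    finally show ?thesis using True by (simp add: algebra_simps)
  next
    case False
    have "Phi (R+r) (C+\<bar>r\<bar>) = Phi (R + (-1)*(-r)) (C+(-r))" using False by simp
    also have "\<dots> \<le> (1-(-r))*Phi R C + (-r)*Phi (R+(-1)) (C+1)" using interp[OF C RC, of "-r" "-1"] False r by simp
    also have "\<dots> = Phi R C + (-r)*(Phi (R-1) (C+1) - Phi R C)" by (simp add: algebra_simps)
    also have "\<dots> \<le> Phi R C + (-r)*(- anh_w R C + 4/(C+1))"
      using c2 False by (intro add_left_mono mult_left_mono) auto
    finally show ?thesis using False by (simp add: algebra_simps)
  qed
qed

lemma anh_w_nonneg: assumes "0 \<le> C" shows "0 \<le> anh_w R C"
proof -
  have "(max 0 (R-1))^2 \<le> (max 0 (R+1))^2" by (intro power_mono) auto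
  hence "(max 0 (R-1))^2/(3*(C+1)) \<le> (max 0 (R+1))^2/(3*(C+1))"
    using assms by (intro divide_right_mono) auto
  thus ?thesis by (simp add: anh_w_def Phi_def)
qed

lemma anh_w_00: "0 < anh_w 0 0"
  by (simp add: anh_w_def Phi_def)

lemma potential_bound:
  fixes r :: "nat \<Rightarrow> nat set \<Rightarrow> real" and K :: "nat set set" and t :: nat
    and \<rho> \<gamma> :: "nat set \<Rightarrow> nat \<Rightarrow> real"
  assumes rho_def: "\<And>I s. \<rho> I s = (\<Sum>u\<in>I \<inter> {..<s}. r u I)"
    and gam_def: "\<And>I s. \<gamma> I s = (\<Sum>u\<in>I \<inter> {..<s}. \<bar>r u I\<bar>)"
    and fin: "finite K" and pos: "\<forall>I\<in>K. 0 \<notin> I"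
    and rb: "\<forall>I\<in>K. \<forall>u\<in>I. u \<le> t \<longrightarrow> \<bar>r u I\<bar> \<le> 1"
    and meta: "\<forall>s\<in>{1..t}. (\<Sum>I\<in>K. if s \<in> I then anh_w (\<rho> I s) (\<gamma> I s) * r s I else 0) \<le> 0"
  shows "(\<Sum>I\<in>K. Phi (\<rho> I (Suc t)) (\<gamma> I (Suc t))) \<le> card K * (5 + 4 * ln (1 + real t))"
proof -
  have split: "I \<inter> {..<Suc s} = (if s \<in> I then insert s (I \<inter> {..<s}) else I \<inter> {..<s})" for I s
    by (auto simp: less_Suc_eq)
  have rhoS: "\<rho> I (Suc s) = \<rho> I s + (if s \<in> I then r s I else 0)" for I s
    unfolding rho_def split by (auto simp: sum.insert)
  have gamS: "\<gamma> I (Suc s) = \<gamma> I s + (if s \<in> I then \<bar>r s I\<bar> else 0)" for I s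
    unfolding gam_def split by (auto simp: sum.insert)
  have gam0: "0 \<le> \<gamma> I s" for I s unfolding gam_def by (simp add: sum_nonneg)
  have rhogam: "\<bar>\<rho> I s\<bar> \<le> \<gamma> I s" for I s unfolding rho_def gam_def by (rule sum_abs)
  have init: "\<rho> I 1 = 0" "\<gamma> I 1 = 0" if "I \<in> K" for I
  proof -
    have "I \<inter> {..<1} = {}" using pos that by auto
    thus "\<rho> I 1 = 0" "\<gamma> I 1 = 0" unfolding rho_def gam_def by simp_all
  qed
  define Pot where "Pot = (\<lambda>s. \<Sum>I\<in>K. Phi (\<rho> I s) (\<gamma> I s))"
  define h where "h = (\<lambda>u I. if u \<in> I then \<bar>r u I\<bar> / (\<gamma> I u + 1) else 0)"
  have Pot1: "Pot 1 = card K" unfolding Pot_def using init by (simp add: Phi_def)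
  have step: "Pot (Suc s) \<le> Pot s + (\<Sum>I\<in>K. 4 * h s I)" if s: "s \<in> {1..t}" for s
  proof -
    have each: "Phi (\<rho> I (Suc s)) (\<gamma> I (Suc s)) \<le> Phi (\<rho> I s) (\<gamma> I s)
        + (if s \<in> I then anh_w (\<rho> I s) (\<gamma> I s) * r s I else 0) + 4 * h s I" if I: "I \<in> K" for I
    proof (cases "s \<in> I")
      case True
      have "\<bar>r s I\<bar> \<le> 1" using rb I True s by auto
      from phi_step[OF gam0 rhogam this]
      show ?thesis using True by (simp add: rhoS gamS h_def)
    next
      case False thus ?thesis by (simp add: rhoS gamS h_def)
    qed
    have "Pot (Suc s) \<le> (\<Sum>I\<in>K. Phi (\<rho> I s) (\<gamma> I s)
        + (if s \<in> I then anh_w (\<rho> I s) (\<gamma> I s) * r s I else 0) + 4 * h s I)"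
      unfolding Pot_def by (rule sum_mono) (rule each)
    also have "\<dots> = Pot s + (\<Sum>I\<in>K. if s \<in> I then anh_w (\<rho> I s) (\<gamma> I s) * r s I else 0)
        + (\<Sum>I\<in>K. 4 * h s I)"
      unfolding Pot_def by (simp add: sum.distrib)
    also have "\<dots> \<le> Pot s + (\<Sum>I\<in>K. 4 * h s I)" using meta s by auto
    finally show ?thesis .
  qed
  have iter: "Pot (Suc s) \<le> card K + (\<Sum>I\<in>K. \<Sum>u\<in>{1..s}. 4 * h u I)" if "s \<le> t" for s
    using that
  proof (induction s)
    case 0 thus ?case using Pot1 by simp
  next
    case (Suc s)
    have "Pot (Suc (Suc s)) \<le> Pot (Suc s) + (\<Sum>I\<in>K. 4 * h (Suc s) I)"
      using step[of "Suc s"] Suc.prems by simp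
    also have "\<dots> \<le> card K + (\<Sum>I\<in>K. \<Sum>u\<in>{1..s}. 4 * h u I) + (\<Sum>I\<in>K. 4 * h (Suc s) I)"
      using Suc by simp
    also have "\<dots> = card K + (\<Sum>I\<in>K. \<Sum>u\<in>{1..Suc s}. 4 * h u I)"
      by (simp add: sum.distrib[symmetric] add.commute)
    finally show ?case .
  qed
  define G where "G = (\<lambda>c::real. ln (1 + c) - 1/(1 + c))"
  have harm: "(\<Sum>u\<in>{1..s}. h u I) \<le> G (\<gamma> I (Suc s)) + 1" if I: "I \<in> K" and "s \<le> t" for I s
    using that(2)
  proof (induction s)
    case 0 thus ?case using init[OF I] by (simp add: G_def)
  next
    case (Suc s)
    have "h (Suc s) I \<le> G (\<gamma> I (Suc (Suc s))) - G (\<gamma> I (Suc s))"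
    proof (cases "Suc s \<in> I")
      case True
      have "\<bar>r (Suc s) I\<bar> \<le> 1" using rb I True Suc.prems by auto
      from harm_step[OF abs_ge_zero this gam0]
      show ?thesis using True by (simp add: h_def G_def gamS[of I "Suc s"] add.commute)
    next
      case False thus ?thesis by (simp add: h_def gamS)
    qed
    moreover have "(\<Sum>u\<in>{1..s}. h u I) \<le> G (\<gamma> I (Suc s)) + 1" using Suc by simp
    ultimately show ?case by simp
  qed
  have gamt: "\<gamma> I (Suc t) \<le> real t" if I: "I \<in> K" for I
  proof -
    have "\<gamma> I (Suc t) \<le> (\<Sum>u\<in>I \<inter> {..<Suc t}. 1)" unfolding gam_def
      using rb I by (intro sum_mono) auto
    also have "\<dots> = real (card (I \<inter> {..<Suc t}))" by simp
    also have "card (I \<inter> {..<Suc t}) \<le> card {1..t}"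
    proof (intro card_mono)
      have "0 \<notin> I" using pos I by auto
      thus "I \<inter> {..<Suc t} \<subseteq> {1..t}" by (auto simp: less_Suc_eq_le Suc_le_eq) (metis gr0I)
    qed simp
    finally show ?thesis by simp
  qed
  have perI: "(\<Sum>u\<in>{1..t}. 4 * h u I) \<le> 4 * (1 + ln (1 + real t))" if I: "I \<in> K" for I
  proof -
    have "(\<Sum>u\<in>{1..t}. h u I) \<le> G (\<gamma> I (Suc t)) + 1" using harm[OF I] by simp
    also have "\<dots> \<le> ln (1 + real t) + 1"
    proof -
      have g0: "0 \<le> \<gamma> I (Suc t)" by (rule gam0)
      have "ln (1 + \<gamma> I (Suc t)) \<le> ln (1 + real t)" using gamt[OF I] g0 by simp
      moreover have "0 \<le> 1/(1 + \<gamma> I (Suc t))" using g0 by simp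
      ultimately show ?thesis unfolding G_def by linarith
    qed
    finally show ?thesis by (simp add: sum_distrib_left[symmetric])
  qed
  have "Pot (Suc t) \<le> card K + (\<Sum>I\<in>K. 4 * (1 + ln (1 + real t)))"
  proof -
    have "(\<Sum>I\<in>K. \<Sum>u\<in>{1..t}. 4 * h u I) \<le> (\<Sum>I\<in>K. 4 * (1 + ln (1 + real t)))"
      using perI by (intro sum_mono) auto
    thus ?thesis using iter[of t] by linarith
  qed
  also have "\<dots> = card K * (5 + 4 * ln (1 + real t))" by (simp add: algebra_simps)
  finally show ?thesis unfolding Pot_def .
qed

lemma dense_form:
  assumes "I \<in> dense_intervals T"
  shows "\<exists>a b. I = {a..b} \<and> 1 \<le> a \<and> a \<le> b"
proof -
  obtain k i where I: "I = {(i - 1) * 2 ^ k + 1 .. i * 2 ^ k}" and i: "1 \<le> i"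
    using assms unfolding dense_intervals_def by auto
  have "i * 2^k = (i-1) * 2^k + 2^k" using i by (metis add.commute le_add_diff_inverse mult_Suc plus_1_eq_Suc)
  moreover have "(1::nat) \<le> 2^k" by simp
  ultimately have "(i - 1) * 2 ^ k + 1 \<le> i * 2 ^ k" by linarith
  thus ?thesis using I by auto
qed

lemma Min_ival: "a \<le> b \<Longrightarrow> Min {a..b::nat} = a"
  by (rule Min_eqI) auto
lemma Max_ival: "a \<le> b \<Longrightarrow> Max {a..b::nat} = b"
  by (rule Max_eqI) auto

lemma dense_Min:
  assumes "I \<in> dense_intervals T"
  shows "I = {Min I..Max I}" "1 \<le> Min I" "Min I \<le> Max I"
  using dense_form[OF assms] by (auto simp: Min_ival Max_ival)

lemma dense_mem:
  assumes "I \<in> dense_intervals T"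
  shows "s \<in> I \<longleftrightarrow> Min I \<le> s \<and> s \<le> Max I"
proof -
  obtain a b where "I = {a..b}" "1 \<le> a" "a \<le> b" using dense_form[OF assms] by blast
  thus ?thesis by (simp add: Min_ival Max_ival)
qed

lemma dense_cut:
  assumes "I \<in> dense_intervals T" "s \<le> Max I"
  shows "I \<inter> {..<s} = {Min I..<s}"
proof -
  obtain a b where ab: "I = {a..b}" "1 \<le> a" "a \<le> b" using dense_form[OF assms(1)] by blast
  thus ?thesis using assms(2) by (auto simp: Min_ival Max_ival)
qed

lemma proj_in:
  fixes \<Omega> :: "'a::euclidean_space set"
  assumes "closed \<Omega>" "\<Omega> \<noteq> {}"
  shows "proj \<Omega> x \<in> \<Omega>"
  unfolding proj_def
  by (rule someI2[of _ "closest_point \<Omega> x"]) (use closest_point_exists[OF assms] in auto)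

lemma card_K:
  assumes T: "1 \<le> T"
  shows "finite {I\<in>dense_intervals T. Min I \<le> t}"
    and "real (card {I\<in>dense_intervals T. Min I \<le> t}) \<le> real t * (1 + log 2 (real T))"
proof -
  define S where "S = {k::nat. 2^k \<le> T}"
  define F where "F = (\<lambda>(k::nat,i::nat). {(i - 1) * 2 ^ k + 1 .. i * 2 ^ k})"
  define L where "L = nat \<lfloor>log 2 (real T)\<rfloor>"
  have SL: "S \<subseteq> {..L}"
  proof
    fix k assume "k \<in> S"
    hence "2^k \<le> T" by (simp add: S_def)
    hence "real (2^k) \<le> real T" by linarith
    hence "real k \<le> log 2 (real T)" by (intro le_log_of_power) auto
    thus "k \<in> {..L}" unfolding L_def by (simp add: le_nat_floor)
  qed
  have finS: "finite S" using SL finite_subset by blast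
  have sub: "{I\<in>dense_intervals T. Min I \<le> t} \<subseteq> F ` (S \<times> {1..t})"
  proof
    fix I assume "I \<in> {I\<in>dense_intervals T. Min I \<le> t}"
    hence I: "I \<in> dense_intervals T" "Min I \<le> t" by auto
    obtain k i where Iki: "I = {(i - 1) * 2 ^ k + 1 .. i * 2 ^ k}" and i: "1 \<le> i" and k: "2^k \<le> T"
      using I(1) unfolding dense_intervals_def by auto
    have ne: "(i - 1) * 2 ^ k + 1 \<le> i * 2 ^ k" using dense_form[OF I(1)] Iki
      by (metis atLeastAtMost_iff atLeastatMost_empty_iff2 empty_iff order_refl)
    have "Min I = (i - 1) * 2 ^ k + 1" using Iki ne by (simp only: Min_ival)
    hence "(i - 1) * 2 ^ k + 1 \<le> t" using I by simp
    moreover have "i - 1 \<le> (i - 1) * 2 ^ k" by simp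
    ultimately have "i \<le> t" using i by linarith
    thus "I \<in> F ` (S \<times> {1..t})" using i k Iki unfolding F_def S_def by force
  qed
  show fin: "finite {I\<in>dense_intervals T. Min I \<le> t}"
    using sub finS by (meson finite_SigmaI finite_atLeastAtMost finite_imageI finite_subset)
  have "card {I\<in>dense_intervals T. Min I \<le> t} \<le> card (F ` (S \<times> {1..t}))"
    using sub finS by (intro card_mono) auto
  also have "\<dots> \<le> card (S \<times> {1..t})" by (rule card_image_le) (use finS in auto)
  also have "\<dots> = card S * t" by (simp add: card_cartesian_product)
  also have "card S \<le> Suc L" using card_mono[OF _ SL] by simp
  hence "card S * t \<le> Suc L * t" by (rule mult_right_mono) simp
  finally have c: "real (card {I\<in>dense_intervals T. Min I \<le> t}) \<le> real (Suc L) * real t"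
    by (metis of_nat_le_iff of_nat_mult)
  have "0 \<le> log 2 (real T)" using T by simp
  hence "real L \<le> log 2 (real T)" unfolding L_def by linarith
  hence "real (Suc L) * real t \<le> (1 + log 2 (real T)) * real t" by (intro mult_right_mono) auto
  with c show "real (card {I\<in>dense_intervals T. Min I \<le> t}) \<le> real t * (1 + log 2 (real T))"
    by (simp add: mult.commute)
qed

lemma final_step:
  fixes \<rho> \<gamma> n M c :: real
  assumes rg: "\<bar>\<rho>\<bar> \<le> \<gamma>" and gn: "\<gamma> \<le> n" and PM: "Phi \<rho> \<gamma> \<le> M"
    and Mc: "ln M \<le> c" and c0: "0 \<le> c"
  shows "\<rho> \<le> sqrt (3*n*c)"
proof (cases "\<rho> \<le> 0")
  case True
  have "0 \<le> n" using rg gn by linarith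
  hence "0 \<le> sqrt (3*n*c)" using c0 by simp
  thus ?thesis using True by linarith
next
  case False
  hence gp: "0 < \<gamma>" using rg by linarith
  have M0: "0 < M" using PM by (smt (verit) Phi_def exp_gt_zero)
  have "\<rho>^2/(3*\<gamma>) = ln (Phi \<rho> \<gamma>)" using False by (simp add: Phi_def)
  also have "\<dots> \<le> ln M" using PM M0 by (subst ln_le_cancel_iff) (auto simp: Phi_def)
  finally have "\<rho>^2/(3*\<gamma>) \<le> c" using Mc by linarith
  hence "\<rho>^2 \<le> c * (3*\<gamma>)" using gp by (simp add: divide_le_eq)
  also have "\<dots> \<le> c * (3*n)" using gn c0 by (intro mult_left_mono) auto
  finally show ?thesis by (intro real_le_rsqrt) (simp add: algebra_simps)
qed

lemma c_bound:
  fixes t T :: nat and k :: real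
  assumes t: "1 \<le> t" and T: "1 \<le> T" and k: "1 \<le> k" "k \<le> real t * (1 + log 2 (real T))"
  shows "ln (k * (5 + 4 * ln (1 + real t)))
     \<le> 1 + ln (real t) + ln (1 + log 2 (real T)) + ln ((5 + 3 * ln (1 + real t)) / 2)"
proof -
  define L where "L = ln (1 + real t)"
  have L0: "0 \<le> L" unfolding L_def by simp
  have lg: "0 \<le> log 2 (real T)" using T by simp
  have e: "27/10 \<le> exp (1::real)" using e_approx_32 by (simp add: abs_if split: if_splits)
  have "5 + 4*L \<le> (27/10) * ((5 + 3*L)/2)" using L0 by simp
  also have "\<dots> \<le> exp 1 * ((5 + 3*L)/2)" using e L0 by (intro mult_right_mono) auto
  finally have B: "5 + 4*L \<le> exp 1 * ((5 + 3*L)/2)" .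
  have A: "ln (5 + 4*L) \<le> 1 + ln ((5 + 3*L)/2)"
  proof -
    have "ln (5 + 4*L) \<le> ln (exp 1 * ((5 + 3*L)/2))" using B L0 by (subst ln_le_cancel_iff) auto
    also have "\<dots> = 1 + ln ((5 + 3*L)/2)" using L0 by (subst ln_mult) auto
    finally show ?thesis .
  qed
  have "ln (k * (5 + 4*L)) \<le> ln ((real t * (1 + log 2 (real T))) * (5 + 4*L))"
    using k L0 by (intro ln_mono mult_right_mono) auto
  also have "\<dots> = ln (real t) + ln (1 + log 2 (real T)) + ln (5 + 4*L)"
    using t lg L0 by (simp add: ln_mult)
  finally show ?thesis using A unfolding L_def by linarith
qed

theorem lemma1:
  fixes \<Omega> :: "'a::euclidean_space set"
    and f :: "nat \<Rightarrow> 'a \<Rightarrow> real" and g :: "nat \<Rightarrow> 'a \<Rightarrow> 'a"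
    and D G :: real and T :: nat
    and wexp :: "nat set \<Rightarrow> nat \<Rightarrow> 'a" and w :: "nat \<Rightarrow> 'a"
    and J :: "nat set" and t :: nat
  assumes cvx: "convex \<Omega>" and cl: "closed \<Omega>" and ne: "\<Omega> \<noteq> {}"
    and DG: "D > 0" "G > 0"
    and fconv: "\<forall>s\<in>{1..T}. convex_on \<Omega> (f s)"
    and grad: "\<forall>s\<in>{1..T}. \<forall>x\<in>\<Omega>. (f s has_derivative (\<lambda>h. g s x \<bullet> h)) (at x within \<Omega>)"
    and A3: "\<forall>s\<in>{1..T}. \<forall>x\<in>\<Omega>. 0 \<le> f s x \<and> f s x \<le> 1"
    and init1: "\<forall>I\<in>dense_intervals T. Min I = 1 \<longrightarrow> wexp I 1 \<in> \<Omega>"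
    and init: "\<forall>I\<in>dense_intervals T. Min I > 1 \<longrightarrow>
       (let P = {Min I - card I .. Min I - 1}; s = Min I - 1 in
        wexp I (Min I) = proj \<Omega> (wexp P s - eta D G I *\<^sub>R g s (wexp P s)))"
    and step: "\<forall>I\<in>dense_intervals T. \<forall>s. s \<in> I \<and> s + 1 \<in> I \<longrightarrow>
       wexp I (s + 1) = proj \<Omega> (wexp I s - eta D G I *\<^sub>R g s (wexp I s))"
    and play: "\<forall>s\<in>{1..T}. w s = (\<Sum>I\<in>active T s. meta_p T f w wexp s I *\<^sub>R wexp I s)"
    and J: "J \<in> dense_intervals T" and tJ: "t \<in> J" and tT: "t \<le> T"
  shows "(\<Sum>u=Min J..t. f u (w u)) - (\<Sum>u=Min J..t. f u (wexp J u))
         \<le> sqrt (3 * real (t - Min J + 1) *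
              (1 + ln (real t) + ln (1 + log 2 (real T)) + ln ((5 + 3 * ln (1 + real t)) / 2)))"
proof -
  note Jint = dense_Min[OF J]
  have tJ': "Min J \<le> t" "t \<le> Max J" using tJ dense_mem[OF J] by auto
  have t1: "1 \<le> t" using Jint(2) tJ' by linarith
  have T1: "1 \<le> T" using t1 tT by linarith
  have pin: "\<And>x. proj \<Omega> x \<in> \<Omega>" using proj_in[OF cl ne] .
  have win: "wexp I s \<in> \<Omega>" if I: "I \<in> dense_intervals T" and sI: "s \<in> I" for I s
  proof -
    note Iint = dense_Min[OF I]
    have sb: "Min I \<le> s" "s \<le> Max I" using sI dense_mem[OF I] by auto
    show ?thesis
    proof (cases "s = Min I")
      case True
      show ?thesis
      proof (cases "Min I = 1")
        case True thus ?thesis using init1 I \<open>s = Min I\<close> by auto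
      next
        case False
        hence "Min I > 1" using Iint by simp
        hence "wexp I (Min I) = proj \<Omega> (wexp {Min I - card I .. Min I - 1} (Min I - 1)
            - eta D G I *\<^sub>R g (Min I - 1) (wexp {Min I - card I .. Min I - 1} (Min I - 1)))"
          using init I by (simp add: Let_def)
        thus ?thesis using True pin by simp
      qed
    next
      case False
      hence lt: "Min I < s" using sb by simp
      define n where "n = s - 1"
      have n1: "s = n + 1" using lt unfolding n_def by simp
      have "Min I \<le> n" "n \<le> Max I" using lt sb unfolding n_def by auto
      hence "n \<in> I" using dense_mem[OF I] by simp
      note n = n1 this
      hence "wexp I s = proj \<Omega> (wexp I n - eta D G I *\<^sub>R g n (wexp I n))"
        using step I sI by auto
      thus ?thesis using pin by simp
    qed
  qed
  define q where "q = (\<lambda>s I. anh_w (regR f w wexp I s) (regC f w wexp I s))"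
  have regC0: "0 \<le> regC f w wexp I s" for I s by (simp add: regC_def sum_nonneg)
  have q0: "0 \<le> q s I" for s I using anh_w_nonneg[OF regC0] by (simp add: q_def)
  have Kfin: "finite {I\<in>dense_intervals T. Min I \<le> s}" for s using card_K(1)[OF T1] .
  have meta: "w s \<in> \<Omega> \<and> (\<Sum>I\<in>active T s. q s I * (f s (w s) - f s (wexp I s))) \<le> 0"
    if s: "s \<in> {1..T}" for s
  proof -
    define A where "A = active T s"
    have sD: "{s} \<in> dense_intervals T"
    proof -
      have "{s} = {(s - 1) * 2 ^ 0 + 1 .. s * 2 ^ 0}" using s by auto
      moreover have "(2::nat)^0 \<le> T \<and> 1 \<le> s" using s by auto
      ultimately show ?thesis unfolding dense_intervals_def by blast
    qed
    hence sA: "{s} \<in> A" by (simp add: A_def active_def)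
    have "A \<subseteq> {I\<in>dense_intervals T. Min I \<le> s}"
    proof
      fix I assume "I \<in> A"
      hence I: "I \<in> dense_intervals T" "s \<in> I" by (auto simp: A_def active_def)
      have "Min I \<le> s" using I(2) dense_mem[OF I(1)] by simp
      thus "I \<in> {I\<in>dense_intervals T. Min I \<le> s}" using I by simp
    qed
    hence finA: "finite A" using Kfin finite_subset by blast
    have "regR f w wexp {s} s = 0" "regC f w wexp {s} s = 0" by (simp_all add: regR_def regC_def)
    hence qs: "0 < q s {s}" using anh_w_00 by (simp add: q_def)
    define S where "S = (\<Sum>I\<in>A. q s I)"
    have "q s {s} \<le> S" unfolding S_def by (rule member_le_sum[OF sA]) (use q0 finA in auto)
    hence S0: "0 < S" using qs by linarith
    have p: "meta_p T f w wexp s I = q s I / S" for I unfolding meta_p_def q_def S_def A_def by simp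
    have ws: "w s = (\<Sum>I\<in>A. (q s I / S) *\<^sub>R wexp I s)" using play s p by (simp add: A_def)
    have sum1: "(\<Sum>I\<in>A. q s I / S) = 1" using S0 by (simp add: S_def sum_divide_distrib[symmetric])
    have inA: "\<And>I. I \<in> A \<Longrightarrow> wexp I s \<in> \<Omega>" using win by (auto simp: A_def active_def)
    have nn: "\<And>I. I \<in> A \<Longrightarrow> 0 \<le> q s I / S" using q0 S0 by simp
    have wsin: "w s \<in> \<Omega>" unfolding ws by (rule convex_sum[OF finA cvx sum1 nn inA])
    have Ane: "A \<noteq> {}" using sA by auto
    have fc: "convex_on \<Omega> (f s)" using fconv s by auto
    have jen: "f s (w s) \<le> (\<Sum>I\<in>A. (q s I / S) * f s (wexp I s))"
      unfolding ws by (rule convex_on_sum[OF finA Ane fc sum1 nn inA])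
    have e1: "S * (\<Sum>I\<in>A. (q s I / S) * f s (wexp I s)) = (\<Sum>I\<in>A. q s I * f s (wexp I s))"
      using S0 by (auto simp: sum_distrib_left intro!: sum.cong)
    have "(\<Sum>I\<in>A. q s I * (f s (w s) - f s (wexp I s)))
        = S * f s (w s) - (\<Sum>I\<in>A. q s I * f s (wexp I s))"
      by (simp add: right_diff_distrib sum_subtractf S_def sum_distrib_right)
    also have "\<dots> = S * (f s (w s) - (\<Sum>I\<in>A. (q s I / S) * f s (wexp I s)))"
      using e1 by (simp add: right_diff_distrib)
    also have "\<dots> \<le> 0" using S0 jen by (simp add: mult_nonneg_nonpos)
    finally show ?thesis using wsin by (simp add: A_def)
  qed
  define r where "r = (\<lambda>u I. f u (w u) - f u (wexp I u))"
  have rb: "\<bar>r u I\<bar> \<le> 1" if I: "I \<in> dense_intervals T" and uI: "u \<in> I" and uT: "u \<le> T" for u I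
  proof -
    have "1 \<le> u" using dense_Min(2)[OF I] uI dense_mem[OF I] by auto
    hence u: "u \<in> {1..T}" using uT by simp
    have "w u \<in> \<Omega>" using meta[OF u] by simp
    moreover have "wexp I u \<in> \<Omega>" using win[OF I uI] .
    ultimately have "0 \<le> f u (w u)" "f u (w u) \<le> 1" "0 \<le> f u (wexp I u)" "f u (wexp I u) \<le> 1"
      using A3 u by auto
    thus ?thesis by (simp add: r_def abs_le_iff)
  qed
  define K where "K = {I\<in>dense_intervals T. Min I \<le> t}"
  have finK: "finite K" unfolding K_def by (rule Kfin)
  have cardK: "real (card K) \<le> real t * (1 + log 2 (real T))" unfolding K_def by (rule card_K(2)[OF T1])
  have JK: "J \<in> K" using J tJ' by (simp add: K_def)
  define \<rho> where "\<rho> = (\<lambda>I s. \<Sum>u\<in>I \<inter> {..<s}. r u I)"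
  define \<gamma> where "\<gamma> = (\<lambda>I s. \<Sum>u\<in>I \<inter> {..<s}. \<bar>r u I\<bar>)"
  have PB: "(\<Sum>I\<in>K. Phi (\<rho> I (Suc t)) (\<gamma> I (Suc t))) \<le> card K * (5 + 4 * ln (1 + real t))"
  proof (rule potential_bound[where r = r])
    show "\<And>I s. \<rho> I s = (\<Sum>u\<in>I \<inter> {..<s}. r u I)" by (simp add: \<rho>_def)
    show "\<And>I s. \<gamma> I s = (\<Sum>u\<in>I \<inter> {..<s}. \<bar>r u I\<bar>)" by (simp add: \<gamma>_def)
    show "finite K" by (rule finK)
    show "\<forall>I\<in>K. 0 \<notin> I"
    proof
      fix I assume "I \<in> K"
      hence I: "I \<in> dense_intervals T" by (simp add: K_def)
      show "0 \<notin> I" using dense_Min(2)[OF I] dense_mem[OF I] by auto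
    qed
    show "\<forall>I\<in>K. \<forall>u\<in>I. u \<le> t \<longrightarrow> \<bar>r u I\<bar> \<le> 1"
      using rb tT by (auto simp: K_def)
    show "\<forall>s\<in>{1..t}. (\<Sum>I\<in>K. if s \<in> I then anh_w (\<rho> I s) (\<gamma> I s) * r s I else 0) \<le> 0"
    proof
      fix s assume s: "s \<in> {1..t}"
      have sT: "s \<in> {1..T}" using s tT by auto
      have filt: "{I\<in>K. s \<in> I} = active T s"
      proof
        show "{I\<in>K. s \<in> I} \<subseteq> active T s" by (auto simp: K_def active_def)
        show "active T s \<subseteq> {I\<in>K. s \<in> I}"
        proof
          fix I assume "I \<in> active T s"
          hence I: "I \<in> dense_intervals T" "s \<in> I" by (auto simp: active_def)
          have "Min I \<le> s" using I(2) dense_mem[OF I(1)] by simp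
          thus "I \<in> {I\<in>K. s \<in> I}" using I s by (simp add: K_def)
        qed
      qed
      have ag: "anh_w (\<rho> I s) (\<gamma> I s) * r s I = q s I * (f s (w s) - f s (wexp I s))"
        if I: "I \<in> active T s" for I
      proof -
        have I': "I \<in> dense_intervals T" "s \<in> I" using I by (auto simp: active_def)
        have "s \<le> Max I" using I'(2) dense_mem[OF I'(1)] by simp
        hence "I \<inter> {..<s} = {Min I..<s}" by (rule dense_cut[OF I'(1)])
        thus ?thesis by (simp add: \<rho>_def \<gamma>_def q_def regR_def regC_def r_def)
      qed
      have "(\<Sum>I\<in>K. if s \<in> I then anh_w (\<rho> I s) (\<gamma> I s) * r s I else 0)
          = (\<Sum>I\<in>{I\<in>K. s \<in> I}. anh_w (\<rho> I s) (\<gamma> I s) * r s I)"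
        using finK by (simp add: sum.inter_filter)
      also have "\<dots> = (\<Sum>I\<in>active T s. q s I * (f s (w s) - f s (wexp I s)))"
        unfolding filt by (rule sum.cong) (auto simp: ag)
      also have "\<dots> \<le> 0" using meta[OF sT] by simp
      finally show "(\<Sum>I\<in>K. if s \<in> I then anh_w (\<rho> I s) (\<gamma> I s) * r s I else 0) \<le> 0" .
    qed
  qed
  have Phi0: "0 \<le> Phi x y" for x y by (simp add: Phi_def)
  have PJ: "Phi (\<rho> J (Suc t)) (\<gamma> J (Suc t)) \<le> card K * (5 + 4 * ln (1 + real t))"
  proof -
    have "Phi (\<rho> J (Suc t)) (\<gamma> J (Suc t)) \<le> (\<Sum>I\<in>K. Phi (\<rho> I (Suc t)) (\<gamma> I (Suc t)))"
      by (rule member_le_sum[OF JK]) (use Phi0 finK in auto)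
    with PB show ?thesis by linarith
  qed
  have Jcut: "J \<inter> {..<Suc t} = {Min J..t}" using tJ'
    by (auto simp: dense_mem[OF J])
  have rhoJ: "\<rho> J (Suc t) = (\<Sum>u=Min J..t. f u (w u)) - (\<Sum>u=Min J..t. f u (wexp J u))"
    unfolding \<rho>_def Jcut r_def by (simp add: sum_subtractf)
  have gamJ: "\<gamma> J (Suc t) \<le> real (t - Min J + 1)"
  proof -
    have "\<gamma> J (Suc t) \<le> (\<Sum>u\<in>{Min J..t}. 1)" unfolding \<gamma>_def Jcut
    proof (rule sum_mono)
      fix u assume "u \<in> {Min J..t}"
      hence "u \<in> J" "u \<le> T" using tJ' dense_mem[OF J] tT by auto
      thus "\<bar>r u J\<bar> \<le> 1" using rb J by simp
    qed
    also have "\<dots> = real (t - Min J + 1)" using tJ' by simp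
    finally show ?thesis .
  qed
  have rg: "\<bar>\<rho> J (Suc t)\<bar> \<le> \<gamma> J (Suc t)" unfolding \<rho>_def \<gamma>_def by (rule sum_abs)
  have "0 < card K" using JK finK card_gt_0_iff by blast
  hence k1: "1 \<le> real (card K)" by simp
  have cb: "ln (real (card K) * (5 + 4 * ln (1 + real t)))
     \<le> 1 + ln (real t) + ln (1 + log 2 (real T)) + ln ((5 + 3 * ln (1 + real t)) / 2)"
    by (rule c_bound[OF t1 T1 k1 cardK])
  have c0: "0 \<le> 1 + ln (real t) + ln (1 + log 2 (real T)) + ln ((5 + 3 * ln (1 + real t)) / 2)"
  proof -
    have "0 \<le> ln (real t)" using t1 by simp
    moreover have "0 \<le> ln (1 + log 2 (real T))" using T1 by simp
    moreover have "0 \<le> ln ((5 + 3 * ln (1 + real t)) / 2)" by simp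
    ultimately show ?thesis by linarith
  qed
  show ?thesis
    using final_step[OF rg gamJ PJ cb c0] rhoJ by simp
qed

end
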